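(* Let $(\mathcal{E},\mathcal{L},\mathcal{B})$ be a weakly left resolving labelled space whose accommodating family $\mathcal{B}$ is closed under relative complements, and let $S$ be its associated inverse semigroup. A filter in $E(S)$ of infinite type is tight if and only if it is an ultrafilter.
   Context: A directed graph $\mathcal{E}=(\mathcal{E}^0,\mathcal{E}^1,r,s)$ has countable nonempty vertex set, edge set, range/source maps; paths satisfy $r(\lambda_i)=s(\lambda_{i+1})$. A labelled graph has a surjective labelling $\mathcal{L}:\mathcal{E}^1\to\mathcal{A}$ extended letterwise to finite and infinite paths. $\omega$ is the empty word, $\mathcal{L}^+=\bigcup_{n\ge1}\mathcal{L}(\mathcal{E}^n)$, $\mathcal{L}^*=\{\omega\}\cup\mathcal{L}^+$, $\mathcal{L}^\infty$ the labels of infinite paths. For $A\subseteq\mathcal{E}^0$, $\alpha\in\mathcal{L}^+$: $r(A,\alpha)=\{r(\lambda):\mathcal{L}(\lambda)=\alpha,\ s(\lambda)\in A\}$, $r(A,\omega)=A$, $r(\alpha)=r(\mathcal{E}^0,\alpha)$. $\mathcal{B}$ accommodating: closed under $r(\cdot,\alpha)$, finite intersections and unions, contains $r(\alpha)$ for $\alpha\in\mathcal{L}^+$; labelled space weakly left resolving if $r(A\cap B,\alpha)=r(A,\alpha)\cap r(B,\alpha)$ for $A,B\in\mathcal{B}$, $\alpha\in\mathcal{L}^+$. $\mathcal{B}_\alpha=\mathcal{B}\cap\mathcal{P}(r(\alpha))$. $S$ = triples $(\alpha,A,\beta)$, $\alpha,\beta\in\mathcal{L}^*$, $\emptyset\ne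 A\in\mathcal{B}_\alpha\cap\mathcal{B}_\beta$, plus $0$; product $(\alpha,A,\beta)(\gamma,B,\delta)=(\alpha\gamma',r(A,\gamma')\cap B,\delta)$ if $\gamma=\beta\gamma'$, $=(\alpha,A\cap r(B,\beta'),\delta\beta')$ if $\beta=\gamma\beta'$, $=0$ otherwise (empty middle entry identified with $0$). $E(S)=\{(\alpha,A,\alpha)\}\cup\{0\}$, $p\le q$ iff $pq=p$. A filter in a poset with least element $0$ is a nonempty upward-closed subset not containing $0$ in which any two elements have a common lower bound in it; an ultrafilter is a maximal filter. The words of elements of a filter $\xi$ in $E(S)$ are pairwise comparable; $\xi$ is of infinite type if there is no longest such word. For $x\in E(S)$, $Z\subseteq\{y:y\le x\}$ is a cover for $x$ if for every nonzero $y\le x$ there is $z\in Z$ with $zy\neq0$; a filter $\xi$ is tight if for every $x\in\xi$ and every finite cover $Z$ of $x$, $Z\cap\xi\neq\emptyset$. *)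

theory Defs
  imports Main "HOL-Library.Sublist" "HOL-Library.Countable_Set"
begin

text \<open>A directed graph is given by a vertex type 'v, an edge type 'e and
source/range maps; a labelling is a map from edges to an alphabet 'a
(the alphabet is taken to be the image of the labelling, so the labelling
is surjective onto it).\<close>

definition is_path :: "('e \<Rightarrow> 'v) \<Rightarrow> ('e \<Rightarrow> 'v) \<Rightarrow> 'e list \<Rightarrow> bool" where
  "is_path src rng es \<longleftrightarrow> es \<noteq> [] \<and>
     (\<forall>i. Suc i < length es \<longrightarrow> rng (es ! i) = src (es ! Suc i))"

definition Lplus :: "('e \<Rightarrow> 'v) \<Rightarrow> ('e \<Rightarrow> 'v) \<Rightarrow> ('e \<Rightarrow> 'a) \<Rightarrow> 'a list set" where
  "Lplus src rng lab = {map lab es | es. is_path src rng es}"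

definition Lstar :: "('e \<Rightarrow> 'v) \<Rightarrow> ('e \<Rightarrow> 'v) \<Rightarrow> ('e \<Rightarrow> 'a) \<Rightarrow> 'a list set" where
  "Lstar src rng lab = insert [] (Lplus src rng lab)"

definition rel_range :: "('e \<Rightarrow> 'v) \<Rightarrow> ('e \<Rightarrow> 'v) \<Rightarrow> ('e \<Rightarrow> 'a) \<Rightarrow> 'v set \<Rightarrow> 'a list \<Rightarrow> 'v set" where
  "rel_range src rng lab A \<alpha> =
     (if \<alpha> = [] then A
      else {rng (last es) | es. is_path src rng es \<and> map lab es = \<alpha> \<and> src (hd es) \<in> A})"

definition accommodating :: "('e \<Rightarrow> 'v) \<Rightarrow> ('e \<Rightarrow> 'v) \<Rightarrow> ('e \<Rightarrow> 'a) \<Rightarrow> 'v set set \<Rightarrow> bool" where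
  "accommodating src rng lab B \<longleftrightarrow>
     (\<forall>A\<in>B. \<forall>\<alpha>\<in>Lplus src rng lab. rel_range src rng lab A \<alpha> \<in> B) \<and>
     (\<forall>A\<in>B. \<forall>C\<in>B. A \<inter> C \<in> B \<and> A \<union> C \<in> B) \<and>
     (\<forall>\<alpha>\<in>Lplus src rng lab. rel_range src rng lab UNIV \<alpha> \<in> B)"

definition weakly_left_resolving :: "('e \<Rightarrow> 'v) \<Rightarrow> ('e \<Rightarrow> 'v) \<Rightarrow> ('e \<Rightarrow> 'a) \<Rightarrow> 'v set set \<Rightarrow> bool" where
  "weakly_left_resolving src rng lab B \<longleftrightarrow>
     (\<forall>A\<in>B. \<forall>C\<in>B. \<forall>\<alpha>\<in>Lplus src rng lab.
        rel_range src rng lab (A \<inter> C) \<alpha> = rel_range src rng lab A \<alpha> \<inter> rel_range src rng lab C \<alpha>)"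

definition closed_rel_compl :: "'v set set \<Rightarrow> bool" where
  "closed_rel_compl B \<longleftrightarrow> (\<forall>A\<in>B. \<forall>C\<in>B. A - C \<in> B)"

definition B_of :: "('e \<Rightarrow> 'v) \<Rightarrow> ('e \<Rightarrow> 'v) \<Rightarrow> ('e \<Rightarrow> 'a) \<Rightarrow> 'v set set \<Rightarrow> 'a list \<Rightarrow> 'v set set" where
  "B_of src rng lab B \<alpha> = {A \<in> B. A \<subseteq> rel_range src rng lab UNIV \<alpha>}"

text \<open>The inverse semigroup S: None represents 0, Some (alpha, A, beta) a triple.\<close>
type_synonym ('a, 'v) selt = "('a list \<times> 'v set \<times> 'a list) option"

definition S_set :: "('e \<Rightarrow> 'v) \<Rightarrow> ('e \<Rightarrow> 'v) \<Rightarrow> ('e \<Rightarrow> 'a) \<Rightarrow> 'v set set \<Rightarrow> ('a, 'v) selt set" where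
  "S_set src rng lab B = insert None
     {Some (\<alpha>, A, \<beta>) | \<alpha> A \<beta>. \<alpha> \<in> Lstar src rng lab \<and> \<beta> \<in> Lstar src rng lab \<and> A \<noteq> {} \<and>
        A \<in> B_of src rng lab B \<alpha> \<and> A \<in> B_of src rng lab B \<beta>}"

definition mk_triple :: "'a list \<Rightarrow> 'v set \<Rightarrow> 'a list \<Rightarrow> ('a, 'v) selt" where
  "mk_triple \<alpha> A \<beta> = (if A = {} then None else Some (\<alpha>, A, \<beta>))"

definition S_mult :: "('e \<Rightarrow> 'v) \<Rightarrow> ('e \<Rightarrow> 'v) \<Rightarrow> ('e \<Rightarrow> 'a) \<Rightarrow> ('a, 'v) selt \<Rightarrow> ('a, 'v) selt \<Rightarrow> ('a, 'v) selt" where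
  "S_mult src rng lab p q =
     (case p of None \<Rightarrow> None
      | Some (\<alpha>, A, \<beta>) \<Rightarrow> (case q of None \<Rightarrow> None
        | Some (\<gamma>, C, \<delta>) \<Rightarrow>
            (if prefix \<beta> \<gamma> then
               (let \<gamma>' = drop (length \<beta>) \<gamma> in
                 mk_triple (\<alpha> @ \<gamma>') (rel_range src rng lab A \<gamma>' \<inter> C) \<delta>)
             else if prefix \<gamma> \<beta> then
               (let \<beta>' = drop (length \<gamma>) \<beta> in
                 mk_triple \<alpha> (A \<inter> rel_range src rng lab C \<beta>') (\<delta> @ \<beta>'))
             else None)))"

definition ES :: "('e \<Rightarrow> 'v) \<Rightarrow> ('e \<Rightarrow> 'v) \<Rightarrow> ('e \<Rightarrow> 'a) \<Rightarrow> 'v set set \<Rightarrow> ('a, 'v) selt set" where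
  "ES src rng lab B = {p \<in> S_set src rng lab B. p = None \<or> (\<exists>\<alpha> A. p = Some (\<alpha>, A, \<alpha>))}"

definition S_le :: "('e \<Rightarrow> 'v) \<Rightarrow> ('e \<Rightarrow> 'v) \<Rightarrow> ('e \<Rightarrow> 'a) \<Rightarrow> ('a, 'v) selt \<Rightarrow> ('a, 'v) selt \<Rightarrow> bool" where
  "S_le src rng lab p q \<longleftrightarrow> S_mult src rng lab p q = p"

definition is_filter :: "('e \<Rightarrow> 'v) \<Rightarrow> ('e \<Rightarrow> 'v) \<Rightarrow> ('e \<Rightarrow> 'a) \<Rightarrow> 'v set set \<Rightarrow> ('a, 'v) selt set \<Rightarrow> bool" where
  "is_filter src rng lab B \<xi> \<longleftrightarrow>
     \<xi> \<subseteq> ES src rng lab B \<and> \<xi> \<noteq> {} \<and> None \<notin> \<xi> \<and>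
     (\<forall>x\<in>\<xi>. \<forall>y\<in>ES src rng lab B. S_le src rng lab x y \<longrightarrow> y \<in> \<xi>) \<and>
     (\<forall>x\<in>\<xi>. \<forall>y\<in>\<xi>. \<exists>z\<in>\<xi>. S_le src rng lab z x \<and> S_le src rng lab z y)"

definition is_ultrafilter :: "('e \<Rightarrow> 'v) \<Rightarrow> ('e \<Rightarrow> 'v) \<Rightarrow> ('e \<Rightarrow> 'a) \<Rightarrow> 'v set set \<Rightarrow> ('a, 'v) selt set \<Rightarrow> bool" where
  "is_ultrafilter src rng lab B \<xi> \<longleftrightarrow>
     is_filter src rng lab B \<xi> \<and>
     (\<forall>\<eta>. is_filter src rng lab B \<eta> \<and> \<xi> \<subseteq> \<eta> \<longrightarrow> \<eta> = \<xi>)"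

definition filter_words :: "('a, 'v) selt set \<Rightarrow> 'a list set" where
  "filter_words \<xi> = {\<alpha>. \<exists>A. Some (\<alpha>, A, \<alpha>) \<in> \<xi>}"

definition infinite_type :: "('a, 'v) selt set \<Rightarrow> bool" where
  "infinite_type \<xi> \<longleftrightarrow> \<not> (\<exists>\<alpha>\<in>filter_words \<xi>. \<forall>\<beta>\<in>filter_words \<xi>. length \<beta> \<le> length \<alpha>)"

definition is_cover :: "('e \<Rightarrow> 'v) \<Rightarrow> ('e \<Rightarrow> 'v) \<Rightarrow> ('e \<Rightarrow> 'a) \<Rightarrow> 'v set set \<Rightarrow> ('a, 'v) selt \<Rightarrow> ('a, 'v) selt set \<Rightarrow> bool" where
  "is_cover src rng lab B x Z \<longleftrightarrow>
     Z \<subseteq> {y \<in> ES src rng lab B. S_le src rng lab y x} \<and>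
     (\<forall>y\<in>ES src rng lab B. y \<noteq> None \<and> S_le src rng lab y x \<longrightarrow>
        (\<exists>z\<in>Z. S_mult src rng lab z y \<noteq> None))"

definition is_tight :: "('e \<Rightarrow> 'v) \<Rightarrow> ('e \<Rightarrow> 'v) \<Rightarrow> ('e \<Rightarrow> 'a) \<Rightarrow> 'v set set \<Rightarrow> ('a, 'v) selt set \<Rightarrow> bool" where
  "is_tight src rng lab B \<xi> \<longleftrightarrow> is_filter src rng lab B \<xi> \<and>
     (\<forall>x\<in>\<xi>. \<forall>Z. finite Z \<and> is_cover src rng lab B x Z \<longrightarrow> Z \<inter> \<xi> \<noteq> {})"

end

theory Submission
  imports Defs
begin


lemma is_path_Cons:
  "is_path src rng (e#es) \<longleftrightarrow> (es = [] \<or> (rng e = src (hd es) \<and> is_path src rng es))"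
proof
  assume h: "is_path src rng (e#es)"
  show "es = [] \<or> (rng e = src (hd es) \<and> is_path src rng es)"
  proof (cases "es = []")
    case False
    have "Suc 0 < length (e#es)" using False by simp
    then have "rng ((e#es)!0) = src ((e#es)!Suc 0)" using h unfolding is_path_def by blast
    then have "rng e = src (hd es)" using False by (simp add: hd_conv_nth)
    moreover have "is_path src rng es" unfolding is_path_def
    proof (intro conjI allI impI)
      fix i assume "Suc i < length es"
      with h have "rng ((e#es) ! Suc i) = src ((e#es) ! Suc (Suc i))" unfolding is_path_def by auto
      then show "rng (es ! i) = src (es ! Suc i)" by simp
    qed (use False in auto)
    ultimately show ?thesis by auto
  qed auto
next
  assume h: "es = [] \<or> (rng e = src (hd es) \<and> is_path src rng es)"
  show "is_path src rng (e#es)" unfolding is_path_def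
  proof (intro conjI allI impI)
    fix i assume i: "Suc i < length (e#es)"
    show "rng ((e # es) ! i) = src ((e # es) ! Suc i)"
    proof (cases i)
      case 0 then show ?thesis using h i by (auto simp: hd_conv_nth)
    next
      case (Suc j) then show ?thesis using h i by (auto simp: is_path_def)
    qed
  qed auto
qed

lemma is_path_append:
  assumes "es1 \<noteq> []" "es2 \<noteq> []"
  shows "is_path src rng (es1 @ es2) \<longleftrightarrow>
    is_path src rng es1 \<and> is_path src rng es2 \<and> rng (last es1) = src (hd es2)"
  using assms(1)
proof (induction es1)
  case Nil then show ?case by simp
next
  case (Cons e es1)
  show ?case
  proof (cases "es1 = []")
    case True then show ?thesis using assms(2) by (auto simp add: is_path_Cons)
  next
    case False
    then show ?thesis using Cons.IH by (auto simp: is_path_Cons)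
  qed
qed

lemma rr_Nil[simp]: "rel_range src rng lab A [] = A"
  by (simp add: rel_range_def)

lemma rr_mono: "A \<subseteq> C \<Longrightarrow> rel_range src rng lab A g \<subseteq> rel_range src rng lab C g"
  by (auto simp: rel_range_def)

lemma rr_Un: "rel_range src rng lab (A \<union> C) g = rel_range src rng lab A g \<union> rel_range src rng lab C g"
  by (auto simp: rel_range_def)

lemma rr_empty[simp]: "rel_range src rng lab {} g = {}"
  by (auto simp: rel_range_def)

lemma rr_notL: "g \<noteq> [] \<Longrightarrow> g \<notin> Lplus src rng lab \<Longrightarrow> rel_range src rng lab A g = {}"
  by (auto simp: rel_range_def Lplus_def)

lemma rr_append:
  "rel_range src rng lab A (a @ b) = rel_range src rng lab (rel_range src rng lab A a) b"
proof (cases "a = [] \<or> b = []")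
  case True then show ?thesis by auto
next
  case False
  then have an: "a \<noteq> []" and bn: "b \<noteq> []" by auto
  show ?thesis
  proof
    show "rel_range src rng lab A (a @ b) \<subseteq> rel_range src rng lab (rel_range src rng lab A a) b"
    proof
      fix x assume "x \<in> rel_range src rng lab A (a @ b)"
      then obtain es where es: "x = rng (last es)" "is_path src rng es" "map lab es = a @ b" "src (hd es) \<in> A"
        using an by (auto simp: rel_range_def)
      define es1 where "es1 = take (length a) es"
      define es2 where "es2 = drop (length a) es"
      have m1: "map lab es1 = a" using es(3) unfolding es1_def by (metis append_eq_conv_conj take_map)
      have m2: "map lab es2 = b" using es(3) unfolding es2_def by (metis append_eq_conv_conj drop_map)
      have n1: "es1 \<noteq> []" using m1 an by auto
      have n2: "es2 \<noteq> []" using m2 bn by auto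
      have eq: "es = es1 @ es2" by (simp add: es1_def es2_def)
      have p: "is_path src rng es1" "is_path src rng es2" "rng (last es1) = src (hd es2)"
        using is_path_append[OF n1 n2] es(2) eq by auto
      have "src (hd es1) \<in> A" using es(4) eq n1 by simp
      then have "rng (last es1) \<in> rel_range src rng lab A a"
        using p m1 an by (auto simp: rel_range_def)
      then show "x \<in> rel_range src rng lab (rel_range src rng lab A a) b"
        using p m2 bn es(1) eq n2 unfolding rel_range_def by auto
    qed
  next
    show "rel_range src rng lab (rel_range src rng lab A a) b \<subseteq> rel_range src rng lab A (a @ b)"
    proof
      fix x assume "x \<in> rel_range src rng lab (rel_range src rng lab A a) b"
      then obtain es2 where e2: "x = rng (last es2)" "is_path src rng es2" "map lab es2 = b"
          "src (hd es2) \<in> rel_range src rng lab A a"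
        using bn by (auto simp: rel_range_def)
      then obtain es1 where e1: "src (hd es2) = rng (last es1)" "is_path src rng es1" "map lab es1 = a"
          "src (hd es1) \<in> A"
        using an by (auto simp: rel_range_def)
      have n1: "es1 \<noteq> []" using e1 an by auto
      have n2: "es2 \<noteq> []" using e2 bn by auto
      have "is_path src rng (es1 @ es2)" by (subst is_path_append[OF n1 n2]) (use e1 e2 in auto)
      then show "x \<in> rel_range src rng lab A (a @ b)"
        using e1 e2 n1 n2 an unfolding rel_range_def by (auto intro!: exI[of _ "es1 @ es2"])
    qed
  qed
qed



lemma ES_Some_iff:
  "Some (a, A, b) \<in> ES src rng lab B \<longleftrightarrow>
    a = b \<and> a \<in> Lstar src rng lab \<and> A \<noteq> {} \<and> A \<in> B \<and> A \<subseteq> rel_range src rng lab UNIV a"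
  by (auto simp: ES_def S_set_def B_of_def)

lemma ES_None[simp]: "None \<in> ES src rng lab B"
  by (auto simp: ES_def S_set_def)

lemma ES_E:
  assumes "x \<in> ES src rng lab B"
  obtains "x = None"
  | a A where "x = Some (a, A, a)" "a \<in> Lstar src rng lab" "A \<noteq> {}" "A \<in> B"
      "A \<subseteq> rel_range src rng lab UNIV a"
proof (cases x)
  case None then show ?thesis using that by auto
next
  case (Some t)
  then obtain a A b where "x = Some (a, A, b)" by (cases t) auto
  then show ?thesis using that assms by (auto simp: ES_Some_iff)
qed

lemma mk_triple_None[simp]: "mk_triple a A b = None \<longleftrightarrow> A = {}"
  by (simp add: mk_triple_def)

lemma mk_triple_Some[simp]: "mk_triple a A b = Some (c, C, d) \<longleftrightarrow> A \<noteq> {} \<and> a = c \<and> A = C \<and> b = d"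
  by (auto simp add: mk_triple_def)

lemma mult_app1:
  "S_mult src rng lab (Some (a, A, a)) (Some (a @ g, C, a @ g)) =
     mk_triple (a @ g) (rel_range src rng lab A g \<inter> C) (a @ g)"
  by (simp add: S_mult_def Let_def)

lemma mult_app2:
  "S_mult src rng lab (Some (a @ g, A, a @ g)) (Some (a, C, a)) =
     mk_triple (a @ g) (A \<inter> rel_range src rng lab C g) (a @ g)"
proof (cases "g = []")
  case True then show ?thesis by (simp add: S_mult_def Let_def Int_commute)
next
  case False
  then have "\<not> prefix (a @ g) a" by (simp add: prefix_def)
  then show ?thesis by (simp add: S_mult_def Let_def)
qed

lemma mult_same:
  "S_mult src rng lab (Some (a, A, a)) (Some (a, C, a)) = mk_triple a (A \<inter> C) a"
  using mult_app1[of src rng lab a A "[]" C] by simp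

lemma mult_incomp:
  "\<not> prefix a b \<Longrightarrow> \<not> prefix b a \<Longrightarrow> S_mult src rng lab (Some (a, A, a)) (Some (b, C, b)) = None"
  by (simp add: S_mult_def)

lemma mult_None1[simp]: "S_mult src rng lab None y = None"
  by (simp add: S_mult_def)
lemma mult_None2[simp]: "S_mult src rng lab x None = None"
  by (cases x) (auto simp: S_mult_def)

lemma le_None[simp]: "S_le src rng lab x None \<longleftrightarrow> x = None"
  by (auto simp add: S_le_def)
lemma None_le[simp]: "S_le src rng lab None y"
  by (simp add: S_le_def)

lemma le_iff:
  assumes "E \<noteq> {}"
  shows "S_le src rng lab (Some (d, E, d)) (Some (a, A, a)) \<longleftrightarrow>
    (\<exists>g. d = a @ g \<and> E \<subseteq> rel_range src rng lab A g)"
proof (cases "prefix a d")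
  case True
  then obtain g where d: "d = a @ g" by (auto simp: prefix_def)
  show ?thesis unfolding d S_le_def mult_app2 using assms by auto
next
  case False
  show ?thesis
  proof (cases "prefix d a")
    case True
    then obtain g where a: "a = d @ g" by (auto simp: prefix_def)
    have "S_le src rng lab (Some (d, E, d)) (Some (a, A, a)) \<longleftrightarrow> False"
      using False assms unfolding a S_le_def mult_app1 by (auto simp: prefix_def)
    then show ?thesis using False by (auto simp: prefix_def)
  next
    case False2: False
    then show ?thesis using False by (auto simp: S_le_def mult_incomp prefix_def)
  qed
qed



context
  fixes src rng :: "'e \<Rightarrow> 'v" and lab :: "'e \<Rightarrow> 'a" and B :: "'v set set"
  assumes acc: "accommodating src rng lab B"
    and wlr: "weakly_left_resolving src rng lab B"
    and crc: "closed_rel_compl B"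
begin

abbreviation "rr \<equiv> rel_range src rng lab"
abbreviation "EE \<equiv> ES src rng lab B"
abbreviation "sle \<equiv> S_le src rng lab"
abbreviation "smul \<equiv> S_mult src rng lab"
abbreviation "filt \<equiv> is_filter src rng lab B"

lemma le_iff': "E \<noteq> {} \<Longrightarrow> sle (Some (d, E, d)) (Some (a, A, a)) \<longleftrightarrow> (\<exists>g. d = a @ g \<and> E \<subseteq> rr A g)"
  by (rule le_iff)

lemma B_Int: "A \<in> B \<Longrightarrow> C \<in> B \<Longrightarrow> A \<inter> C \<in> B"
  using acc by (auto simp: accommodating_def)

lemma B_Diff: "A \<in> B \<Longrightarrow> C \<in> B \<Longrightarrow> A - C \<in> B"
  using crc by (auto simp: closed_rel_compl_def)

lemma rr_B: "A \<in> B \<Longrightarrow> rr A g \<in> B"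
proof -
  assume A: "A \<in> B"
  show ?thesis
  proof (cases "g = []")
    case True then show ?thesis using A by simp
  next
    case False
    show ?thesis
    proof (cases "g \<in> Lplus src rng lab")
      case True then show ?thesis using A acc by (auto simp: accommodating_def)
    next
      case F: False
      have "A - A \<in> B" using B_Diff[OF A A] .
      then show ?thesis using rr_notL[OF False F] by simp
    qed
  qed
qed

lemma rr_Int: "A \<in> B \<Longrightarrow> C \<in> B \<Longrightarrow> rr (A \<inter> C) g = rr A g \<inter> rr C g"
proof (cases "g = []")
  case False
  assume A: "A \<in> B" and C: "C \<in> B"
  show ?thesis
  proof (cases "g \<in> Lplus src rng lab")
    case True then show ?thesis using A C wlr by (auto simp: weakly_left_resolving_def)
  next
    case F: False
    then show ?thesis using rr_notL[OF False F] by simp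
  qed
qed simp

lemma mult_ES: "x \<in> EE \<Longrightarrow> y \<in> EE \<Longrightarrow> smul x y \<in> EE"
proof -
  assume x: "x \<in> EE" and y: "y \<in> EE"
  show ?thesis
  proof (cases rule: ES_E[OF x])
    case (2 a A)
    note xa = 2
    show ?thesis
    proof (cases rule: ES_E[OF y])
      case (2 b C)
      note yb = 2
      show ?thesis
      proof (cases "prefix a b")
        case True
        then obtain g where b: "b = a @ g" by (auto simp: prefix_def)
        have "rr A g \<inter> C \<in> B" using B_Int rr_B xa yb by auto
        then show ?thesis using xa yb unfolding b
          by (auto simp: mult_app1 mk_triple_def ES_Some_iff)
      next
        case False
        show ?thesis
        proof (cases "prefix b a")
          case True
          then obtain g where a: "a = b @ g" by (auto simp: prefix_def)
          have "A \<inter> rr C g \<in> B" using B_Int rr_B xa yb by auto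
          then show ?thesis using xa yb unfolding a
            by (auto simp: mult_app2 mk_triple_def ES_Some_iff)
        next
          case False2: False
          then show ?thesis using False xa yb by (simp add: mult_incomp)
        qed
      qed
    next
      case 1 then show ?thesis by (simp only: 1 mult_None2 ES_None)
    qed
  next
    case 1 then show ?thesis by (simp only: 1 mult_None1 ES_None)
  qed
qed

lemma le_refl: "x \<in> EE \<Longrightarrow> sle x x"
  by (cases rule: ES_E, assumption) (auto simp: le_iff intro: exI[of _ "[]"])

lemma le_trans:
  assumes x: "x \<in> EE" and y: "y \<in> EE" and z: "z \<in> EE" and xy: "sle x y" and yz: "sle y z"
  shows "sle x z"
proof (cases rule: ES_E[OF x])
  case (2 a A)
  note xa = 2
  show ?thesis
  proof (cases rule: ES_E[OF y])
    case 1 then show ?thesis using xy xa by simp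
  next
    case (2 b C)
    note yb = 2
    show ?thesis
    proof (cases rule: ES_E[OF z])
      case 1 then show ?thesis using yz yb by simp
    next
      case (2 c D)
      note zc = 2
      obtain g1 where g1: "a = b @ g1" "A \<subseteq> rr C g1" using xy unfolding xa(1) yb(1) le_iff[OF xa(3)] by auto
      obtain g2 where g2: "b = c @ g2" "C \<subseteq> rr D g2" using yz unfolding yb(1) zc(1) le_iff[OF yb(3)] by auto
      have "rr C g1 \<subseteq> rr (rr D g2) g1" by (rule rr_mono[OF g2(2)])
      then have "A \<subseteq> rr D (g2 @ g1)" using g1(2) by (auto simp: rr_append)
      then show ?thesis unfolding xa(1) zc(1) le_iff[OF xa(3)] using g1 g2 by auto
    qed
  qed
next
  case 1 then show ?thesis by (simp only: 1 None_le)
qed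

lemma mult_le:
  assumes x: "x \<in> EE" and y: "y \<in> EE"
  shows "sle (smul x y) x \<and> sle (smul x y) y"
proof (cases rule: ES_E[OF x])
  case (2 a A)
  note xa = 2
  show ?thesis
  proof (cases rule: ES_E[OF y])
    case (2 b C)
    note yb = 2
    show ?thesis
    proof (cases "prefix a b")
      case True
      then obtain g where b: "b = a @ g" by (auto simp: prefix_def)
      show ?thesis unfolding xa yb b mult_app1
        by (cases "rr A g \<inter> C = {}") (auto simp: mk_triple_def le_iff intro: exI[of _ "[]"])
    next
      case False
      show ?thesis
      proof (cases "prefix b a")
        case True
        then obtain g where a: "a = b @ g" by (auto simp: prefix_def)
        show ?thesis unfolding xa yb a mult_app2
          by (cases "A \<inter> rr C g = {}") (auto simp: mk_triple_def le_iff intro: exI[of _ "[]"])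
      next
        case False2: False
        then show ?thesis using False xa yb by (simp add: mult_incomp)
      qed
    qed
  next
    case 1 then show ?thesis by (simp only: 1 mult_None2 None_le simp_thms)
  qed
next
  case 1 then show ?thesis by (simp only: 1 mult_None1 None_le simp_thms)
qed

lemma glb:
  assumes w: "w \<in> EE" and x: "x \<in> EE" and y: "y \<in> EE" and wx: "sle w x" and wy: "sle w y"
  shows "sle w (smul x y)"
proof (cases rule: ES_E[OF w])
  case (2 d E)
  note wd = 2
  show ?thesis
  proof (cases rule: ES_E[OF x])
    case 1 then show ?thesis using wx wd by simp
  next
    case (2 a A)
    note xa = 2
    show ?thesis
    proof (cases rule: ES_E[OF y])
      case 1 then show ?thesis using wy wd by simp
    next
      case (2 b C)
      note yb = 2
      obtain g1 where g1: "d = a @ g1" "E \<subseteq> rr A g1" using wx unfolding xa(1) wd(1) le_iff[OF wd(3)] by auto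
      obtain g2 where g2: "d = b @ g2" "E \<subseteq> rr C g2" using wy unfolding yb(1) wd(1) le_iff[OF wd(3)] by auto
      have pa: "prefix a d" using g1(1) unfolding prefix_def by blast
      have pb: "prefix b d" using g2(1) unfolding prefix_def by blast
      have "prefix a b \<or> prefix b a" by (rule prefix_same_cases[OF pa pb])
      then show ?thesis
      proof
        assume "prefix a b"
        then obtain g where b: "b = a @ g" by (auto simp: prefix_def)
        have g1': "g1 = g @ g2" using g1(1) g2(1) b by simp
        have "E \<subseteq> rr (rr A g) g2 \<inter> rr C g2" using g1(2) g2(2) g1' by (auto simp: rr_append)
        also have "\<dots> = rr (rr A g \<inter> C) g2" by (rule rr_Int[OF rr_B[OF xa(4)] yb(4), symmetric])
        finally have E: "E \<subseteq> rr (rr A g \<inter> C) g2" .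
        then have ne: "rr A g \<inter> C \<noteq> {}" using wd by auto
        have "smul x y = Some (b, rr A g \<inter> C, b)" unfolding xa(1) yb(1) b mult_app1
          using ne by (simp add: mk_triple_def)
        then show ?thesis unfolding wd(1) using le_iff'[OF wd(3)] E g2(1) by auto
      next
        assume "prefix b a"
        then obtain g where a: "a = b @ g" by (auto simp: prefix_def)
        have g2': "g2 = g @ g1" using g1(1) g2(1) a by simp
        have "E \<subseteq> rr A g1 \<inter> rr (rr C g) g1" using g1(2) g2(2) g2' by (auto simp: rr_append)
        also have "\<dots> = rr (A \<inter> rr C g) g1" by (rule rr_Int[OF xa(4) rr_B[OF yb(4)], symmetric])
        finally have E: "E \<subseteq> rr (A \<inter> rr C g) g1" .
        then have ne: "A \<inter> rr C g \<noteq> {}" using wd by auto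
        have "smul x y = Some (a, A \<inter> rr C g, a)" unfolding xa(1) yb(1) a mult_app2
          using ne by (simp add: mk_triple_def)
        then show ?thesis unfolding wd(1) using le_iff'[OF wd(3)] E g1(1) by auto
      qed
    qed
  qed
next
  case 1 then show ?thesis by (simp only: None_le)
qed


lemma filt_parts:
  assumes "filt \<xi>"
  shows "\<xi> \<subseteq> EE" "\<xi> \<noteq> {}" "None \<notin> \<xi>"
    "\<forall>x\<in>\<xi>. \<forall>y\<in>EE. sle x y \<longrightarrow> y \<in> \<xi>"
    "\<forall>x\<in>\<xi>. \<forall>y\<in>\<xi>. \<exists>z\<in>\<xi>. sle z x \<and> sle z y"
proof -
  note f' = assms[unfolded is_filter_def]
  show "\<xi> \<subseteq> EE" by (rule conjunct1[OF f'])
  show "\<xi> \<noteq> {}" by (rule conjunct1[OF conjunct2[OF f']])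
  show "None \<notin> \<xi>" by (rule conjunct1[OF conjunct2[OF conjunct2[OF f']]])
  show "\<forall>x\<in>\<xi>. \<forall>y\<in>EE. sle x y \<longrightarrow> y \<in> \<xi>" by (rule conjunct1[OF conjunct2[OF conjunct2[OF conjunct2[OF f']]]])
  show "\<forall>x\<in>\<xi>. \<forall>y\<in>\<xi>. \<exists>z\<in>\<xi>. sle z x \<and> sle z y" by (rule conjunct2[OF conjunct2[OF conjunct2[OF conjunct2[OF f']]]])
qed

lemma filt_mem: "filt \<xi> \<Longrightarrow> x \<in> \<xi> \<Longrightarrow> x \<in> EE \<and> x \<noteq> None"
proof -
  assume f: "filt \<xi>" and x: "x \<in> \<xi>"
  have "x \<in> EE" using filt_parts(1)[OF f] x by (rule subsetD)
  moreover have "x \<noteq> None"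
  proof
    assume "x = None"
    then have "None \<in> \<xi>" using x by (simp only:)
    with filt_parts(3)[OF f] show False by contradiction
  qed
  ultimately show ?thesis by (rule conjI)
qed

lemma filt_up: "filt \<xi> \<Longrightarrow> x \<in> \<xi> \<Longrightarrow> y \<in> EE \<Longrightarrow> sle x y \<Longrightarrow> y \<in> \<xi>"
  using filt_parts(4) by blast

lemma filt_low: "filt \<xi> \<Longrightarrow> x \<in> \<xi> \<Longrightarrow> y \<in> \<xi> \<Longrightarrow> \<exists>z\<in>\<xi>. sle z x \<and> sle z y"
  using filt_parts(5) by blast

lemma filt_mult: "filt \<xi> \<Longrightarrow> x \<in> \<xi> \<Longrightarrow> y \<in> \<xi> \<Longrightarrow> smul x y \<in> \<xi>"
proof -
  assume f: "filt \<xi>" and x: "x \<in> \<xi>" and y: "y \<in> \<xi>"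
  obtain z where z: "z \<in> \<xi>" "sle z x" "sle z y" using filt_low[OF f x y] by blast
  have E: "x \<in> EE" "y \<in> EE" "z \<in> EE" using filt_mem[OF f] x y z by auto
  have "sle z (smul x y)" by (rule glb[OF E(3) E(1) E(2) z(2) z(3)])
  then show ?thesis using filt_up[OF f z(1) mult_ES[OF E(1) E(2)]] by simp
qed

lemma ultra_sep:
  assumes u: "is_ultrafilter src rng lab B \<xi>" and z: "z \<in> EE" and zn: "z \<notin> \<xi>"
  shows "\<exists>y\<in>\<xi>. smul z y = None"
proof (rule ccontr)
  assume "\<not> ?thesis"
  then have nz: "\<And>y. y \<in> \<xi> \<Longrightarrow> smul z y \<noteq> None" by auto
  have f: "filt \<xi>" using u unfolding is_ultrafilter_def by blast
  define \<eta> where "\<eta> = {w \<in> EE. \<exists>y\<in>\<xi>. sle (smul z y) w}"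
  have inE: "\<And>y. y \<in> \<xi> \<Longrightarrow> y \<in> EE" using filt_mem[OF f] by auto
  have sub: "\<xi> \<subseteq> \<eta>"
  proof
    fix y assume y: "y \<in> \<xi>"
    then show "y \<in> \<eta>" unfolding \<eta>_def using inE[OF y] mult_le[OF z inE[OF y]] by auto
  qed
  obtain y0 where y0: "y0 \<in> \<xi>" using filt_parts(2)[OF f] by blast
  have fe: "filt \<eta>" unfolding is_filter_def
  proof (intro conjI ballI impI)
    show "\<eta> \<subseteq> EE" unfolding \<eta>_def by auto
    show "\<eta> \<noteq> {}" using sub y0 by auto
    show "None \<notin> \<eta>" unfolding \<eta>_def using nz by auto
  next
    fix x y assume x: "x \<in> \<eta>" and y: "y \<in> EE" and xy: "sle x y"
    then obtain y1 where y1: "y1 \<in> \<xi>" "sle (smul z y1) x" unfolding \<eta>_def by auto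
    have "sle (smul z y1) y"
      using le_trans[OF mult_ES[OF z inE[OF y1(1)]] _ y y1(2) xy] x unfolding \<eta>_def by auto
    then show "y \<in> \<eta>" unfolding \<eta>_def using y y1 by auto
  next
    fix x1 x2 assume x1: "x1 \<in> \<eta>" and x2: "x2 \<in> \<eta>"
    obtain y1 where y1: "y1 \<in> \<xi>" "sle (smul z y1) x1" using x1 unfolding \<eta>_def by auto
    obtain y2 where y2: "y2 \<in> \<xi>" "sle (smul z y2) x2" using x2 unfolding \<eta>_def by auto
    have e1: "x1 \<in> EE" and e2: "x2 \<in> EE" using x1 x2 unfolding \<eta>_def by auto
    obtain y3 where y3: "y3 \<in> \<xi>" "sle y3 y1" "sle y3 y2" using filt_low[OF f y1(1) y2(1)] by blast
    have Ez: "smul z y3 \<in> EE" by (rule mult_ES[OF z inE[OF y3(1)]])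
    have m: "sle (smul z y3) z" "sle (smul z y3) y3" using mult_le[OF z inE[OF y3(1)]] by auto
    have a1: "sle (smul z y3) (smul z y1)"
      by (rule glb[OF Ez z inE[OF y1(1)] m(1) le_trans[OF Ez inE[OF y3(1)] inE[OF y1(1)] m(2) y3(2)]])
    have a2: "sle (smul z y3) (smul z y2)"
      by (rule glb[OF Ez z inE[OF y2(1)] m(1) le_trans[OF Ez inE[OF y3(1)] inE[OF y2(1)] m(2) y3(3)]])
    have b1: "sle (smul z y3) x1" by (rule le_trans[OF Ez mult_ES[OF z inE[OF y1(1)]] e1 a1 y1(2)])
    have b2: "sle (smul z y3) x2" by (rule le_trans[OF Ez mult_ES[OF z inE[OF y2(1)]] e2 a2 y2(2)])
    have "smul z y3 \<in> \<eta>" unfolding \<eta>_def using Ez y3(1) le_refl[OF Ez] by auto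
    then show "\<exists>w\<in>\<eta>. sle w x1 \<and> sle w x2" using b1 b2 by auto
  qed
  have "\<forall>\<eta>'. filt \<eta>' \<and> \<xi> \<subseteq> \<eta>' \<longrightarrow> \<eta>' = \<xi>" using u unfolding is_ultrafilter_def by blast
  then have eq: "\<eta> = \<xi>" using fe sub by blast
  have "sle (smul z y0) z" using mult_le[OF z inE[OF y0]] by blast
  then have "z \<in> \<eta>" unfolding \<eta>_def using z y0 by blast
  then have "z \<in> \<xi>" by (simp only: eq)
  then show False using zn by contradiction
qed

lemma filt_lb:
  assumes f: "filt \<xi>" and fin: "finite Z"
  shows "x \<in> \<xi> \<Longrightarrow> (\<forall>z\<in>Z. g z \<in> \<xi>) \<Longrightarrow> \<exists>y\<in>\<xi>. sle y x \<and> (\<forall>z\<in>Z. sle y (g z))"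
  using fin
proof (induction Z)
  case empty
  then show ?case using le_refl filt_mem[OF f] by auto
next
  case (insert z Z)
  then obtain y where y: "y \<in> \<xi>" "sle y x" "\<forall>z\<in>Z. sle y (g z)" by auto
  have gz: "g z \<in> \<xi>" using insert by auto
  have Ey: "y \<in> EE" and Eg: "g z \<in> EE" using filt_mem[OF f] y gz by auto
  have y': "smul y (g z) \<in> \<xi>" by (rule filt_mult[OF f y(1) gz])
  have Ey': "smul y (g z) \<in> EE" by (rule mult_ES[OF Ey Eg])
  have m: "sle (smul y (g z)) y" "sle (smul y (g z)) (g z)" using mult_le[OF Ey Eg] by auto
  have xE: "x \<in> EE" using filt_mem[OF f insert.prems(1)] by blast
  have xl: "sle (smul y (g z)) x" by (rule le_trans[OF Ey' Ey xE m(1) y(2)])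
  have "\<forall>w\<in>Z. sle (smul y (g z)) (g w)"
  proof
    fix w assume w: "w \<in> Z"
    have "g w \<in> \<xi>" using insert.prems(2) w by blast
    then have gwE: "g w \<in> EE" using filt_mem[OF f] by blast
    have "sle y (g w)" using y(3) w by blast
    then show "sle (smul y (g z)) (g w)" by (rule le_trans[OF Ey' Ey gwE m(1)])
  qed
  then have "\<forall>w\<in>insert z Z. sle (smul y (g z)) (g w)" using m(2) by blast
  then show ?case using y' xl by blast
qed

lemma ultra_tight:
  assumes u: "is_ultrafilter src rng lab B \<xi>"
  shows "is_tight src rng lab B \<xi>"
proof -
  have f: "filt \<xi>" using u unfolding is_ultrafilter_def by blast
  have "Z \<inter> \<xi> \<noteq> {}" if x: "x \<in> \<xi>" and fin: "finite Z" and c: "is_cover src rng lab B x Z" for x Z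
  proof
    assume dis: "Z \<inter> \<xi> = {}"
    have ZE: "\<And>z. z \<in> Z \<Longrightarrow> z \<in> EE" using c unfolding is_cover_def by blast
    have "\<forall>z\<in>Z. \<exists>y. y \<in> \<xi> \<and> smul z y = None" using ultra_sep[OF u ZE] dis by blast
    from bchoice[OF this] obtain g where g: "\<forall>z\<in>Z. g z \<in> \<xi> \<and> smul z (g z) = None" by blast
    obtain y where y: "y \<in> \<xi>" "sle y x" "\<forall>z\<in>Z. sle y (g z)"
      using filt_lb[OF f fin x, of g] g by blast
    have Ey: "y \<in> EE" "y \<noteq> None" using filt_mem[OF f y(1)] by auto
    then obtain z where z: "z \<in> Z" "smul z y \<noteq> None" using c y(2) unfolding is_cover_def by blast
    have Ez: "z \<in> EE" by (rule ZE[OF z(1)])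
    have Eg: "g z \<in> EE" using g z(1) filt_mem[OF f] by auto
    have Ezy: "smul z y \<in> EE" by (rule mult_ES[OF Ez Ey(1)])
    have m: "sle (smul z y) z" "sle (smul z y) y" using mult_le[OF Ez Ey(1)] by auto
    have "sle (smul z y) (g z)" by (rule le_trans[OF Ezy Ey(1) Eg m(2)]) (use y(3) z(1) in auto)
    then have "sle (smul z y) (smul z (g z))" by (rule glb[OF Ezy Ez Eg m(1)])
    then show False using g z by auto
  qed
  then show ?thesis unfolding is_tight_def using f by blast
qed



lemma words_long:
  assumes f: "filt \<xi>" and it: "infinite_type \<xi>"
  shows "\<exists>a\<in>filter_words \<xi>. n \<le> length a"
proof (induction n)
  case 0
  obtain x where x: "x \<in> \<xi>" using filt_parts(2)[OF f] by blast
  have xE: "x \<in> EE" and xn: "x \<noteq> None" using filt_mem[OF f x] by auto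
  show ?case
  proof (cases rule: ES_E[OF xE])
    case 1 then show ?thesis using xn by contradiction
  next
    case (2 a A)
    then have "a \<in> filter_words \<xi>" using x unfolding filter_words_def by blast
    then show ?thesis by blast
  qed
next
  case (Suc n)
  then obtain a where a: "a \<in> filter_words \<xi>" "n \<le> length a" by blast
  have "\<not> (\<forall>b\<in>filter_words \<xi>. length b \<le> length a)" using it a(1) unfolding infinite_type_def by blast
  then obtain b where "b \<in> filter_words \<xi>" "\<not> length b \<le> length a" by blast
  then show ?case using a(2) by (intro bexI[of _ b]) auto
qed

lemma tight_ultra:
  assumes t: "is_tight src rng lab B \<xi>" and it: "infinite_type \<xi>"
  shows "is_ultrafilter src rng lab B \<xi>"
proof -
  have f: "filt \<xi>" using t unfolding is_tight_def by (rule conjunct1)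
  have tt: "\<forall>x\<in>\<xi>. \<forall>Z. finite Z \<and> is_cover src rng lab B x Z \<longrightarrow> Z \<inter> \<xi> \<noteq> {}"
    using t unfolding is_tight_def by (rule conjunct2)
  have main: "\<eta> = \<xi>" if fe: "filt \<eta>" and sub: "\<xi> \<subseteq> \<eta>" for \<eta>
  proof
    show "\<eta> \<subseteq> \<xi>"
    proof
      fix z assume z\<eta>: "z \<in> \<eta>"
      have zE: "z \<in> EE" and zn0: "z \<noteq> None" using filt_mem[OF fe z\<eta>] by auto
      obtain b C where zb: "z = Some (b, C, b)" "C \<in> B"
      proof (cases rule: ES_E[OF zE])
        case 1 then show ?thesis using zn0 by contradiction
      next
        case (2 b C) then show ?thesis using that by blast
      qed
      obtain a where a: "a \<in> filter_words \<xi>" "length b \<le> length a"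
        using words_long[OF f it, of "length b"] by blast
      then obtain A where x\<xi>: "Some (a, A, a) \<in> \<xi>" unfolding filter_words_def by blast
      define x where "x = Some (a, A, a)"
      have x\<xi>': "x \<in> \<xi>" using x\<xi> unfolding x_def .
      have xE: "x \<in> EE" using filt_mem[OF f x\<xi>'] by blast
      have Afacts: "a \<in> Lstar src rng lab" "A \<noteq> {}" "A \<in> B" "A \<subseteq> rr UNIV a"
        using xE unfolding x_def ES_Some_iff by auto
      have x\<eta>: "x \<in> \<eta>" using sub x\<xi>' by blast
      define u where "u = smul z x"
      have u\<eta>: "u \<in> \<eta>" unfolding u_def by (rule filt_mult[OF fe z\<eta> x\<eta>])
      have uE: "u \<in> EE" and un0: "u \<noteq> None" using filt_mem[OF fe u\<eta>] by auto
      have pre: "prefix b a"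
      proof (cases "prefix b a")
        case False
        show ?thesis
        proof (cases "prefix a b")
          case True
          then obtain g where "b = a @ g" by (auto simp: prefix_def)
          then have "g = []" using a(2) by simp
          then show ?thesis using \<open>b = a @ g\<close> by simp
        next
          case False2: False
          have "u = None" unfolding u_def zb(1) x_def by (rule mult_incomp[OF False False2])
          then show ?thesis using un0 by contradiction
        qed
      qed
      then obtain g where ag: "a = b @ g" by (auto simp: prefix_def)
      define D where "D = rr C g \<inter> A"
      have u_eq0: "u = mk_triple a D a" unfolding u_def zb(1) x_def ag D_def by (rule mult_app1)
      then have Dne: "D \<noteq> {}" using un0 by auto
      then have u_eq: "u = Some (a, D, a)" using u_eq0 by (simp add: mk_triple_def)
      have DB: "D \<in> B" using uE unfolding u_eq ES_Some_iff by blast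
      have DA: "D \<subseteq> A" unfolding D_def by blast
      have uz: "sle u z" and ux: "sle u x" using mult_le[OF zE xE] unfolding u_def by auto
      show "z \<in> \<xi>"
      proof (rule ccontr)
        assume zn: "z \<notin> \<xi>"
        have un: "u \<notin> \<xi>"
        proof
          assume "u \<in> \<xi>"
          then have "z \<in> \<xi>" using filt_up[OF f _ zE uz] by blast
          then show False using zn by contradiction
        qed
        have ADne: "A - D \<noteq> {}"
        proof
          assume "A - D = {}"
          then have "D = A" using DA by blast
          then have "u = x" unfolding u_eq x_def by simp
          then show False using un x\<xi>' by simp
        qed
        define v where "v = Some (a, A - D, a)"
        have vE: "v \<in> EE" unfolding v_def ES_Some_iff
          using Afacts ADne B_Diff[OF Afacts(3) DB] by blast
        have cov: "is_cover src rng lab B x {u, v}" unfolding is_cover_def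
        proof (intro conjI ballI impI)
          have "sle v x" unfolding v_def x_def le_iff'[OF ADne] by (intro exI[of _ "[]"]) auto
          then show "{u, v} \<subseteq> {y \<in> EE. sle y x}" using uE vE ux by blast
        next
          fix y assume yE: "y \<in> EE" and yc: "y \<noteq> None \<and> sle y x"
          show "\<exists>w\<in>{u, v}. smul w y \<noteq> None"
          proof (cases rule: ES_E[OF yE])
            case 1 then show ?thesis using yc by blast
          next
            case (2 d E)
            obtain h where h: "d = a @ h" "E \<subseteq> rr A h"
              using yc unfolding 2(1) x_def le_iff'[OF 2(3)] by blast
            have "A = D \<union> (A - D)" using DA by blast
            then have "rr A h = rr D h \<union> rr (A - D) h" using rr_Un by metis
            then have "rr D h \<inter> E \<noteq> {} \<or> rr (A - D) h \<inter> E \<noteq> {}" using h(2) 2(3) by blast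
            moreover have "smul u y = mk_triple (a @ h) (rr D h \<inter> E) (a @ h)"
              unfolding u_eq 2(1) h(1) by (rule mult_app1)
            moreover have "smul v y = mk_triple (a @ h) (rr (A - D) h \<inter> E) (a @ h)"
              unfolding v_def 2(1) h(1) by (rule mult_app1)
            ultimately show ?thesis by (auto simp: mk_triple_def)
          qed
        qed
        have fin: "finite {u, v}" by simp
        have "{u, v} \<inter> \<xi> \<noteq> {}" by (rule tt[rule_format, OF x\<xi>' conjI[OF fin cov]])
        then have v\<xi>: "v \<in> \<xi>" using un by blast
        then have v\<eta>: "v \<in> \<eta>" using sub by blast
        have "smul u v \<in> \<eta>" by (rule filt_mult[OF fe u\<eta> v\<eta>])
        moreover have "smul u v = None" unfolding u_eq v_def mult_same by (simp add: mk_triple_def)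
        ultimately show False using filt_parts(3)[OF fe] by simp
      qed
    qed
  qed (rule sub)
  show ?thesis unfolding is_ultrafilter_def using f main by blast
qed


end

theorem mainTheorem16:
  fixes src rng :: "'e \<Rightarrow> 'v" and lab :: "'e \<Rightarrow> 'a" and B :: "'v set set"
    and \<xi> :: "('a, 'v) selt set"
  assumes "countable (UNIV :: 'v set)" and "countable (UNIV :: 'e set)"
    and "accommodating src rng lab B"
    and "weakly_left_resolving src rng lab B"
    and "closed_rel_compl B"
    and "is_filter src rng lab B \<xi>"
    and "infinite_type \<xi>"
  shows "is_tight src rng lab B \<xi> \<longleftrightarrow> is_ultrafilter src rng lab B \<xi>"
proof
  assume "is_tight src rng lab B \<xi>"
  then show "is_ultrafilter src rng lab B \<xi>"
    by (rule tight_ultra[OF assms(3) assms(4) assms(5) _ assms(7)])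
next
  assume "is_ultrafilter src rng lab B \<xi>"
  then show "is_tight src rng lab B \<xi>"
    by (rule ultra_tight[OF assms(3) assms(4) assms(5)])
qed

end
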